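(* The allocation rule $x$ of the two-bidder auction defined below is monotone (for each $i$ and fixed $v_{-i}$, $v_i\mapsto x_i(v_i,v_{-i})$ is non-decreasing), and the Myerson payments $\pi_i(v)=v_ix_i(v)-\int_0^{v_i}x_i(u,v_{-i})\,du$ satisfy $\pi_i(v)\le 1$ for all $v$ and $i$.
   Context: One divisible good, two bidders with values per unit $v_1,v_2\ge0$ and known budgets $B_1=B_2=1$. The allocation $x(v_1,v_2)=(x_1,x_2)$ is symmetric ($x(v_1,v_2)$ is obtained from $x(v_2,v_1)$ by swapping coordinates) and for $v_1\ge v_2$ is given by the first applicable rule: if $v_1=v_2$, $x=(\frac12,\frac12)$; else if $v_2\le\frac13$, $x=(1,0)$; else if $\frac13\le v_2\le1$, $x=(\frac14+\frac1{4v_2},\frac34-\frac1{4v_2})$; else ($v_2\ge1$) $x=(\frac12,\frac12)$. *)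

theory Defs
  imports "HOL-Analysis.Analysis"
begin

text \<open>Allocation for the ordered case a \<ge> b (first applicable rule).\<close>
definition alloc_ord :: "real \<Rightarrow> real \<Rightarrow> real \<times> real" where
  "alloc_ord a b =
     (if a = b then (1/2, 1/2)
      else if b \<le> 1/3 then (1, 0)
      else if 1/3 \<le> b \<and> b \<le> 1 then (1/4 + 1/(4*b), 3/4 - 1/(4*b))
      else (1/2, 1/2))"

definition alloc :: "real \<Rightarrow> real \<Rightarrow> real \<times> real" where
  "alloc a b = (if b \<le> a then alloc_ord a b else prod.swap (alloc_ord b a))"

definition x1 :: "real \<Rightarrow> real \<Rightarrow> real" where "x1 a b = fst (alloc a b)"
definition x2 :: "real \<Rightarrow> real \<Rightarrow> real" where "x2 a b = snd (alloc a b)"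

definition pay1 :: "real \<Rightarrow> real \<Rightarrow> real" where
  "pay1 a b = a * x1 a b - integral {0..a} (\<lambda>u. x1 u b)"
definition pay2 :: "real \<Rightarrow> real \<Rightarrow> real" where
  "pay2 a b = b * x2 a b - integral {0..b} (\<lambda>u. x2 a u)"

end

theory Submission
  imports Defs
begin

lemma x1_explicit:
  "x1 a b = (if a < b then (if a \<le> 1/3 then 0 else if a \<le> 1 then 3/4 - 1/(4*a) else 1/2)
             else if a = b then 1/2
             else (if b \<le> 1/3 then 1 else if b \<le> 1 then 1/4 + 1/(4*b) else 1/2))"
  unfolding x1_def alloc_def alloc_ord_def by auto

lemma x2_x1: "x2 a b = x1 b a"
  unfolding x1_def x2_def alloc_def alloc_ord_def by auto

lemma pay2_pay1: "pay2 a b = pay1 b a"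
  unfolding pay1_def pay2_def x2_x1 by simp

lemma x1_bounds: "0 \<le> x1 a b" "x1 a b \<le> 1"
proof -
  have h: "1/3 < c \<Longrightarrow> 0 \<le> 3/4 - 1/(4*c) \<and> 3/4 - 1/(4*c) \<le> (1::real)
        \<and> 0 \<le> 1/4 + 1/(4*c) \<and> 1/4 + 1/(4*c) \<le> (1::real)" for c :: real
    by (auto simp: field_simps)
  show "0 \<le> x1 a b" "x1 a b \<le> 1" unfolding x1_explicit using h[of a] h[of b] by auto
qed

lemma x1_mono:
  assumes "0 \<le> a" "a \<le> a'"
  shows "x1 a b \<le> x1 a' b"
proof -
  have inc: "1/3 < c \<Longrightarrow> c \<le> d \<Longrightarrow> 3/4 - 1/(4*c) \<le> 3/4 - 1/(4*(d::real))" for c d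
    by (auto simp: field_simps)
  have l1: "1/3 < c \<Longrightarrow> c \<le> 1 \<Longrightarrow> 3/4 - 1/(4*c) \<le> (1/2::real)" for c
    by (auto simp: field_simps)
  have l2: "1/3 < c \<Longrightarrow> c \<le> 1 \<Longrightarrow> 1/2 \<le> 1/4 + 1/(4*(c::real))" for c
    by (auto simp: field_simps)
  have l3: "1/3 < c \<Longrightarrow> 0 \<le> 3/4 - 1/(4*(c::real))" for c
    by (auto simp: field_simps)
  have l4: "1/3 < c \<Longrightarrow> 3/4 - 1/(4*c) \<le> 1/4 + 1/(4*(d::real))" if "c < d" "d \<le> 1" for c d
    using l1[of c] l2[of d] that by linarith
  show ?thesis unfolding x1_explicit
    using assms inc[of a a'] l1[of a] l2[of b] l3[of a] l3[of a'] l1[of a'] l4[of a b] l1[of b]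
    by (auto simp: not_le not_less)
qed

lemma x1_const: assumes "1 < u" "u \<le> a" shows "x1 u b = x1 a b"
  using assms unfolding x1_explicit by auto

lemma pay1_le: assumes "0 \<le> a" shows "pay1 a b \<le> 1"
proof -
  let ?f = "\<lambda>u. x1 u b"
  have mono: "mono_on {0..c} ?f" for c
    by (auto intro!: mono_onI x1_mono)
  have int: "?f integrable_on {0..c}" for c
    by (rule integrable_on_mono_on[OF mono])
  have nn: "0 \<le> integral {0..c} ?f" for c
    by (rule integral_nonneg[OF int]) (simp add: x1_bounds)
  show ?thesis
  proof (cases "a \<le> 1")
    case True
    have "a * x1 a b \<le> a" using assms x1_bounds[of a b]
      by (simp add: mult_left_le)
    then show ?thesis unfolding pay1_def using nn[of a] True by linarith
  next
    case False
    have "integral {1..a} ?f = integral {1..a} (\<lambda>u. x1 a b)"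
      by (rule integral_spike[where S="{1}"]) (auto simp: x1_const)
    also have "\<dots> = (a - 1) * x1 a b" using False by simp
    finally have e: "integral {1..a} ?f = (a - 1) * x1 a b" .
    have c: "integral {0..1} ?f + integral {1..a} ?f = integral {0..a} ?f"
      using Henstock_Kurzweil_Integration.integral_combine[of 0 1 a ?f] False int[of a] by auto
    have "pay1 a b = x1 a b - integral {0..1} ?f"
      unfolding pay1_def using c e by (simp add: algebra_simps)
    then show ?thesis using nn[of 1] x1_bounds[of a b] by linarith
  qed
qed

theorem mainTheorem11:
  shows "(\<forall>b\<ge>0. mono_on {0..} (\<lambda>a. x1 a b))
       \<and> (\<forall>a\<ge>0. mono_on {0..} (\<lambda>b. x2 a b))
       \<and> (\<forall>a\<ge>0. \<forall>b\<ge>0. pay1 a b \<le> 1 \<and> pay2 a b \<le> 1)"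
  by (auto intro!: mono_onI x1_mono pay1_le simp: x2_x1 pay2_pay1)

end
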